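(* Let $G$ be a finite connected unweighted graph with graph distance $d$, and fix a vertex $r$. For vertices $a,b$ write $(a.b)_r=\tfrac12\big(d(a,r)+d(b,r)-d(a,b)\big)$, and for vertices $x\neq y$ define $$f(x,y)=\max_{x=w_1,w_2,\dots,w_k=y}\ \min_{1\le i\le k-1}(w_i.w_{i+1})_r,$$ the maximum taken over all finite sequences of vertices (of arbitrary length $k\ge 2$) starting at $x$ and ending at $y$. Then for every pair of distinct vertices $x,y$ there exists a sequence $x=w_1,\dots,w_k=y$ attaining the maximum in $f(x,y)$ which is a path in $G$ (i.e. $w_iw_{i+1}\in E(G)$ for all $i$). Moreover, for such a maximizing path, letting $\alpha=\min_i d(w_i,r)$, we have $f(x,y)=\alpha-\tfrac12$ if there exists an $i$ with $d(w_i,r)=d(w_{i+1},r)=\alpha$, and $f(x,y)=\alpha$ otherwise.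
   Context: $(a.b)_r$ is the Gromov product with root $r$. A sequence attains the maximum in $f(x,y)$ if its value $\min_i (w_i.w_{i+1})_r$ equals $f(x,y)$. *)

theory Defs
  imports Main Complex_Main
begin

definition is_walk :: "'a set \<Rightarrow> ('a \<Rightarrow> 'a \<Rightarrow> bool) \<Rightarrow> 'a list \<Rightarrow> bool" where
  "is_walk V E ws \<longleftrightarrow> ws \<noteq> [] \<and> set ws \<subseteq> V \<and>
     (\<forall>i < length ws - 1. E (ws ! i) (ws ! Suc i))"

definition fin_conn_graph :: "'a set \<Rightarrow> ('a \<Rightarrow> 'a \<Rightarrow> bool) \<Rightarrow> bool" where
  "fin_conn_graph V E \<longleftrightarrow> finite V \<and>
     (\<forall>u v. E u v \<longrightarrow> u \<in> V \<and> v \<in> V) \<and>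
     (\<forall>u v. E u v \<longrightarrow> E v u) \<and>
     (\<forall>u. \<not> E u u) \<and>
     (\<forall>a\<in>V. \<forall>b\<in>V. \<exists>ws. is_walk V E ws \<and> hd ws = a \<and> last ws = b)"

definition gdist :: "'a set \<Rightarrow> ('a \<Rightarrow> 'a \<Rightarrow> bool) \<Rightarrow> 'a \<Rightarrow> 'a \<Rightarrow> nat" where
  "gdist V E a b = (LEAST n. \<exists>ws. is_walk V E ws \<and> hd ws = a \<and> last ws = b \<and> length ws = n + 1)"

definition gromov :: "'a set \<Rightarrow> ('a \<Rightarrow> 'a \<Rightarrow> bool) \<Rightarrow> 'a \<Rightarrow> 'a \<Rightarrow> 'a \<Rightarrow> real" where
  "gromov V E r a b = (real (gdist V E a r) + real (gdist V E b r) - real (gdist V E a b)) / 2"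

definition vseq :: "'a set \<Rightarrow> 'a \<Rightarrow> 'a \<Rightarrow> 'a list \<Rightarrow> bool" where
  "vseq V x y ws \<longleftrightarrow> length ws \<ge> 2 \<and> set ws \<subseteq> V \<and> hd ws = x \<and> last ws = y"

definition seqval :: "'a set \<Rightarrow> ('a \<Rightarrow> 'a \<Rightarrow> bool) \<Rightarrow> 'a \<Rightarrow> 'a list \<Rightarrow> real" where
  "seqval V E r ws = Min {gromov V E r (ws ! i) (ws ! Suc i) | i. i < length ws - 1}"

definition fmax :: "'a set \<Rightarrow> ('a \<Rightarrow> 'a \<Rightarrow> bool) \<Rightarrow> 'a \<Rightarrow> 'a \<Rightarrow> 'a \<Rightarrow> real" where
  "fmax V E r x y = Max {seqval V E r ws | ws. vseq V x y ws}"

end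

theory Submission
  imports Defs
begin

lemma is_walk_succ: "is_walk V E ws \<longleftrightarrow> ws \<noteq> [] \<and> set ws \<subseteq> V \<and> successively E ws"
  unfolding is_walk_def successively_conv_nth
  by (metis Suc_diff_1 Suc_less_eq bot_nat_0.not_eq_extremum less_diff_conv list.size(3) not_less_zero)

lemma walk_exists:
  assumes G: "fin_conn_graph V E" and "a \<in> V" "b \<in> V"
  shows "\<exists>ws. is_walk V E ws \<and> hd ws = a \<and> last ws = b \<and> length ws = gdist V E a b + 1"
proof -
  obtain ws where w: "is_walk V E ws" "hd ws = a" "last ws = b"
    using G assms unfolding fin_conn_graph_def by blast
  then have "ws \<noteq> []" by (simp add: is_walk_def)
  then have "\<exists>n. \<exists>ws. is_walk V E ws \<and> hd ws = a \<and> last ws = b \<and> length ws = n + 1"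
    using w by (intro exI[of _ "length ws - 1"]) auto
  from LeastI_ex[OF this] show ?thesis unfolding gdist_def .
qed

lemma gdist_le:
  assumes "is_walk V E ws" "hd ws = a" "last ws = b"
  shows "gdist V E a b \<le> length ws - 1"
proof -
  have "ws \<noteq> []" using assms by (simp add: is_walk_def)
  then show ?thesis unfolding gdist_def
    by (intro Least_le) (use assms in auto)
qed

lemma walk_append:
  assumes "is_walk V E xs" "is_walk V E ys" "last xs = hd ys"
  shows "is_walk V E (xs @ tl ys)"
proof -
  have "ys \<noteq> []" "xs \<noteq> []" using assms by (auto simp: is_walk_def)
  then have "ys = hd ys # tl ys" by simp
  then have "successively E ys \<longleftrightarrow> tl ys = [] \<or> E (hd ys) (hd (tl ys)) \<and> successively E (tl ys)"
    by (metis successively_Cons)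
  then show ?thesis using assms \<open>xs \<noteq> []\<close> \<open>ys \<noteq> []\<close>
    unfolding is_walk_succ
    by (auto simp: successively_append_iff dest: list.set_sel(2))
qed

lemma gdist_tri:
  assumes G: "fin_conn_graph V E" and "a \<in> V" "b \<in> V" "c \<in> V"
  shows "gdist V E a c \<le> gdist V E a b + gdist V E b c"
proof -
  obtain w1 where w1: "is_walk V E w1" "hd w1 = a" "last w1 = b" "length w1 = gdist V E a b + 1"
    using walk_exists[OF G] assms by blast
  obtain w2 where w2: "is_walk V E w2" "hd w2 = b" "last w2 = c" "length w2 = gdist V E b c + 1"
    using walk_exists[OF G] assms by blast
  have "is_walk V E (w1 @ tl w2)" using walk_append w1 w2 by metis
  moreover have "hd (w1 @ tl w2) = a" using w1 by (auto simp: is_walk_def)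
  moreover have "last (w1 @ tl w2) = c" using w1 w2
    by (cases w2) (auto simp: is_walk_def)
  ultimately have "gdist V E a c \<le> length (w1 @ tl w2) - 1" by (rule gdist_le)
  then show ?thesis using w1 w2 by simp
qed

lemma gdist_sym_le:
  assumes G: "fin_conn_graph V E" and "a \<in> V" "b \<in> V"
  shows "gdist V E b a \<le> gdist V E a b"
proof -
  obtain w1 where w1: "is_walk V E w1" "hd w1 = a" "last w1 = b" "length w1 = gdist V E a b + 1"
    using walk_exists[OF G] assms by blast
  have sym: "\<And>u v. E u v \<Longrightarrow> E v u" using G by (auto simp: fin_conn_graph_def)
  have "is_walk V E (rev w1)" using w1(1) unfolding is_walk_succ
    by (auto elim: successively_mono intro: sym)
  moreover have "hd (rev w1) = b" "last (rev w1) = a" using w1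
    by (auto simp: is_walk_def hd_rev last_rev)
  ultimately show ?thesis using gdist_le w1(4) by fastforce
qed

lemma gdist_sym:
  assumes G: "fin_conn_graph V E" and "a \<in> V" "b \<in> V"
  shows "gdist V E b a = gdist V E a b"
  using gdist_sym_le[OF G] assms by (meson antisym)

lemma gdist_self: "a \<in> V \<Longrightarrow> gdist V E a a = 0"
  using gdist_le[of V E "[a]" a a] by (simp add: is_walk_def)

lemma gdist_edge:
  assumes G: "fin_conn_graph V E" and "E a b"
  shows "gdist V E a b = 1"
proof -
  have ab: "a \<in> V" "b \<in> V" "a \<noteq> b" using G assms by (auto simp: fin_conn_graph_def)
  have "is_walk V E [a,b]" using ab assms by (simp add: is_walk_succ)
  then have "gdist V E a b \<le> 1" using gdist_le[of V E "[a,b]" a b] by simp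
  moreover obtain w where w: "is_walk V E w" "hd w = a" "last w = b" "length w = gdist V E a b + 1"
    using walk_exists[OF G] ab by blast
  have "gdist V E a b \<noteq> 0"
  proof
    assume "gdist V E a b = 0"
    then obtain c where "w = [c]" using w(4) by (cases w) auto
    then show False using w ab by simp
  qed
  ultimately show ?thesis by simp
qed

lemma walk_take_drop:
  assumes "is_walk V E w" "0 < k" "k < length w"
  shows "is_walk V E (take k w)" "is_walk V E (drop k w)"
proof -
  have "successively E w" using assms by (simp add: is_walk_succ)
  then have "successively E (take k w)" "successively E (drop k w)"
    using successively_append_iff[of E "take k w" "drop k w"] by auto
  moreover have "set (take k w) \<subseteq> V" "set (drop k w) \<subseteq> V" using assms
    by (auto simp: is_walk_def dest: in_set_takeD in_set_dropD)
  ultimately show "is_walk V E (take k w)" "is_walk V E (drop k w)" using assms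
    by (auto simp: is_walk_succ)
qed

lemma geo_edge:
  assumes G: "fin_conn_graph V E" and r: "r \<in> V"
    and w: "is_walk V E w" "hd w = a" "last w = b" "length w = gdist V E a b + 1"
    and i: "Suc i < length w"
  shows "gromov V E r a b \<le> gromov V E r (w!i) (w!Suc i)"
proof -
  have sV: "set w \<subseteq> V" and ne: "w \<noteq> []" using w by (auto simp: is_walk_def)
  have zV: "w!i \<in> V" "w!Suc i \<in> V" "a \<in> V" "b \<in> V" using sV i ne w by auto
  have e: "E (w!i) (w!Suc i)" using w(1) i by (simp add: is_walk_succ successively_nth)
  have d1: "gdist V E (w!i) (w!Suc i) = 1" using gdist_edge[OF G e] .
  have tk: "is_walk V E (take (Suc i) w)" "is_walk V E (drop (Suc i) w)"
    using walk_take_drop[OF w(1), of "Suc i"] i by auto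
  have "gdist V E a (w!i) \<le> length (take (Suc i) w) - 1"
    by (rule gdist_le[OF tk(1)]) (use w i ne in \<open>auto simp: hd_take last_conv_nth\<close>)
  then have h1: "gdist V E a (w!i) \<le> i" using i by simp
  have "gdist V E (w!Suc i) b \<le> length (drop (Suc i) w) - 1"
    by (rule gdist_le[OF tk(2)]) (use w i ne in \<open>auto simp: hd_drop_conv_nth\<close>)
  then have h2: "gdist V E b (w!Suc i) \<le> gdist V E a b - Suc i"
    using i w(4) gdist_sym[OF G zV(2) zV(4)] by simp
  have t1: "gdist V E a r \<le> gdist V E a (w!i) + gdist V E (w!i) r"
    using gdist_tri[OF G zV(3) zV(1) r] .
  have t2: "gdist V E b r \<le> gdist V E b (w!Suc i) + gdist V E (w!Suc i) r"
    using gdist_tri[OF G zV(4) zV(2) r] .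
  have "Suc i \<le> gdist V E a b" using i w(4) by simp
  then have "real (gdist V E a r) + real (gdist V E b r) - real (gdist V E a b)
     \<le> real (gdist V E (w!i) r) + real (gdist V E (w!Suc i) r) - 1"
    using t1 t2 h1 h2 by linarith
  then show ?thesis unfolding gromov_def d1 by simp
qed

lemma succ_glue:
  assumes "successively P xs" "successively P ys" "xs \<noteq> []" "ys \<noteq> []" "last xs = hd ys"
  shows "successively P (xs @ tl ys)" "hd (xs @ tl ys) = hd xs" "last (xs @ tl ys) = last ys"
    "set (xs @ tl ys) \<subseteq> set xs \<union> set ys"
proof -
  obtain y ys' where ys: "ys = y # ys'" using assms by (cases ys) auto
  show "successively P (xs @ tl ys)" using assms unfolding ys
    by (auto simp: successively_append_iff successively_Cons)
  show "hd (xs @ tl ys) = hd xs" using assms by simp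
  show "last (xs @ tl ys) = last ys" using assms unfolding ys by auto
  show "set (xs @ tl ys) \<subseteq> set xs \<union> set ys" unfolding ys by auto
qed

lemma chain:
  assumes G: "fin_conn_graph V E" and r: "r \<in> V"
  shows "ws \<noteq> [] \<Longrightarrow> set ws \<subseteq> V \<Longrightarrow> successively (\<lambda>a b. t \<le> gromov V E r a b) ws \<Longrightarrow>
    \<exists>W. W \<noteq> [] \<and> set W \<subseteq> V \<and> successively (\<lambda>a b. E a b \<and> t \<le> gromov V E r a b) W
       \<and> hd W = hd ws \<and> last W = last ws"
proof (induction ws)
  case Nil
  then show ?case by simp
next
  case (Cons a ws)
  show ?case
  proof (cases "ws = []")
    case True
    then show ?thesis using Cons.prems by (intro exI[of _ "[a]"]) auto
  next
    case False
    have ta: "t \<le> gromov V E r a (hd ws)" and sw: "successively (\<lambda>a b. t \<le> gromov V E r a b) ws"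
      using Cons.prems False by (auto simp: successively_Cons)
    obtain W where W: "W \<noteq> []" "set W \<subseteq> V" "successively (\<lambda>a b. E a b \<and> t \<le> gromov V E r a b) W"
       "hd W = hd ws" "last W = last ws"
      using Cons.IH False Cons.prems sw by auto
    have aV: "a \<in> V" "hd ws \<in> V" using Cons.prems False by auto
    obtain g where g: "is_walk V E g" "hd g = a" "last g = hd ws" "length g = gdist V E a (hd ws) + 1"
      using walk_exists[OF G aV] by blast
    have "successively (\<lambda>u v. E u v \<and> t \<le> gromov V E r u v) g"
      unfolding successively_conv_nth
    proof (intro allI impI conjI)
      fix i assume i: "Suc i < length g"
      show "E (g!i) (g!Suc i)" using g(1) i by (simp add: is_walk_succ successively_nth)
      show "t \<le> gromov V E r (g!i) (g!Suc i)" using geo_edge[OF G r g i] ta by linarith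
    qed
    moreover have "g \<noteq> []" "set g \<subseteq> V" using g by (auto simp: is_walk_def)
    moreover note gg = succ_glue[OF calculation(1) W(3) calculation(2) W(1)]
    have lg: "last g = hd W" using g W by simp
    show ?thesis
      apply (intro exI[of _ "g @ tl W"])
      using gg[OF lg] W g False \<open>g \<noteq> []\<close> \<open>set g \<subseteq> V\<close> by auto
  qed
qed

lemma seqval_props:
  assumes "2 \<le> length ws"
  shows "\<And>i. Suc i < length ws \<Longrightarrow> seqval V E r ws \<le> gromov V E r (ws!i) (ws!Suc i)"
    "\<exists>i. Suc i < length ws \<and> seqval V E r ws = gromov V E r (ws!i) (ws!Suc i)"
proof -
  have eq: "{gromov V E r (ws ! i) (ws ! Suc i) | i. i < length ws - 1}
      = (\<lambda>i. gromov V E r (ws ! i) (ws ! Suc i)) ` {..<length ws - 1}" by auto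
  have fin: "finite ((\<lambda>i. gromov V E r (ws ! i) (ws ! Suc i)) ` {..<length ws - 1})" by simp
  have ne: "(\<lambda>i. gromov V E r (ws ! i) (ws ! Suc i)) ` {..<length ws - 1} \<noteq> {}" using assms
    by (simp add: lessThan_empty_iff)
  show "\<And>i. Suc i < length ws \<Longrightarrow> seqval V E r ws \<le> gromov V E r (ws!i) (ws!Suc i)"
    unfolding seqval_def eq by (rule Min_le[OF fin]) auto
  show "\<exists>i. Suc i < length ws \<and> seqval V E r ws = gromov V E r (ws!i) (ws!Suc i)"
  proof -
    obtain i where "i < length ws - 1" "seqval V E r ws = gromov V E r (ws!i) (ws!Suc i)"
      using Min_in[OF fin ne] unfolding seqval_def eq by auto
    then show ?thesis by (intro exI[of _ i]) auto
  qed
qed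

lemma seqval_ge:
  assumes "2 \<le> length ws" "\<And>i. Suc i < length ws \<Longrightarrow> t \<le> gromov V E r (ws!i) (ws!Suc i)"
  shows "t \<le> seqval V E r ws"
  using seqval_props(2)[OF assms(1), of V E r] assms(2) by auto

lemma fmax_props:
  assumes "x \<in> V" "y \<in> V" "finite V"
  shows "\<exists>ws. vseq V x y ws \<and> seqval V E r ws = fmax V E r x y"
    "\<And>ws. vseq V x y ws \<Longrightarrow> seqval V E r ws \<le> fmax V E r x y"
proof -
  let ?F = "{seqval V E r ws | ws. vseq V x y ws}"
  have sub: "?F \<subseteq> (\<lambda>(a,b). gromov V E r a b) ` (V \<times> V)"
  proof
    fix v assume "v \<in> ?F"
    then obtain ws where ws: "vseq V x y ws" "v = seqval V E r ws" by auto
    obtain i where "Suc i < length ws" "v = gromov V E r (ws!i) (ws!Suc i)"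
      using seqval_props(2)[of ws V E r] ws by (auto simp: vseq_def)
    moreover have "ws!i \<in> V" "ws!Suc i \<in> V" using ws calculation by (auto simp: vseq_def)
    ultimately show "v \<in> (\<lambda>(a,b). gromov V E r a b) ` (V \<times> V)" by force
  qed
  have fin: "finite ?F" using finite_subset[OF sub] assms by simp
  have "vseq V x y [x,y]" using assms by (simp add: vseq_def)
  then have ne: "?F \<noteq> {}" by blast
  show "\<exists>ws. vseq V x y ws \<and> seqval V E r ws = fmax V E r x y"
    using Min_in Max_in[OF fin ne] unfolding fmax_def by auto
  show "\<And>ws. vseq V x y ws \<Longrightarrow> seqval V E r ws \<le> fmax V E r x y"
    unfolding fmax_def by (rule Max_ge[OF fin]) auto
qed

lemma walk_value:
  assumes G: "fin_conn_graph V E" and r: "r \<in> V" and w: "is_walk V E ws" and n: "2 \<le> length ws"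
  shows "seqval V E r ws = (let \<alpha> = Min ((\<lambda>w. gdist V E w r) ` set ws) in
              (if \<exists>i < length ws - 1. gdist V E (ws ! i) r = \<alpha> \<and> gdist V E (ws ! Suc i) r = \<alpha>
               then real \<alpha> - 1/2 else real \<alpha>))"
proof -
  define L where "L i = gdist V E (ws!i) r" for i
  define \<alpha> where "\<alpha> = Min ((\<lambda>w. gdist V E w r) ` set ws)"
  have sV: "set ws \<subseteq> V" using w by (simp add: is_walk_def)
  have edge: "gromov V E r (ws!i) (ws!Suc i) = (real (L i) + real (L (Suc i)) - 1) / 2"
    and lip: "L i \<le> L (Suc i) + 1" "L (Suc i) \<le> L i + 1"
    if i: "Suc i < length ws" for i
  proof -
    have e: "E (ws!i) (ws!Suc i)" using w i by (simp add: is_walk_succ successively_nth)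
    have V2: "ws!i \<in> V" "ws!Suc i \<in> V" using sV i by auto
    have d1: "gdist V E (ws!i) (ws!Suc i) = 1" by (rule gdist_edge[OF G e])
    then have d1': "gdist V E (ws!Suc i) (ws!i) = 1" using gdist_sym[OF G V2] by simp
    show "gromov V E r (ws!i) (ws!Suc i) = (real (L i) + real (L (Suc i)) - 1) / 2"
      unfolding gromov_def L_def d1 by simp
    show "L i \<le> L (Suc i) + 1" using gdist_tri[OF G V2(1) V2(2) r] d1 unfolding L_def by simp
    show "L (Suc i) \<le> L i + 1" using gdist_tri[OF G V2(2) V2(1) r] d1' unfolding L_def by simp
  qed
  have fin: "finite ((\<lambda>w. gdist V E w r) ` set ws)" by simp
  have ne: "(\<lambda>w. gdist V E w r) ` set ws \<noteq> {}" using n by auto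
  have ale: "\<alpha> \<le> L i" if "i < length ws" for i
    unfolding \<alpha>_def L_def using that by (intro Min_le[OF fin]) auto
  obtain j where j: "j < length ws" "L j = \<alpha>"
    using Min_in[OF fin ne] unfolding \<alpha>_def L_def by (auto simp: in_set_conv_nth)
  show ?thesis
  proof (cases "\<exists>i < length ws - 1. gdist V E (ws ! i) r = \<alpha> \<and> gdist V E (ws ! Suc i) r = \<alpha>")
    case True
    then obtain i where i: "i < length ws - 1" "L i = \<alpha>" "L (Suc i) = \<alpha>" unfolding L_def by auto
    have "seqval V E r ws = real \<alpha> - 1/2"
    proof (rule antisym)
      show "seqval V E r ws \<le> real \<alpha> - 1/2"
      proof -
        have "Suc i < length ws" using i by simp
        then show ?thesis using seqval_props(1)[OF n, of i V E r] edge[of i] i by simp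
      qed
      show "real \<alpha> - 1/2 \<le> seqval V E r ws"
      proof (rule seqval_ge[OF n])
        fix k assume k: "Suc k < length ws"
        show "real \<alpha> - 1/2 \<le> gromov V E r (ws!k) (ws!Suc k)"
          using edge[OF k] ale[of k] ale[of "Suc k"] k by simp
      qed
    qed
    then show ?thesis using True unfolding \<alpha>_def Let_def by simp
  next
    case False
    then have nf: "\<And>i. Suc i < length ws \<Longrightarrow> \<not> (L i = \<alpha> \<and> L (Suc i) = \<alpha>)" unfolding L_def by auto
    have "seqval V E r ws = real \<alpha>"
    proof (rule antisym)
      obtain i where i: "Suc i < length ws" "min (L i) (L (Suc i)) = \<alpha>"
      proof (cases "Suc j < length ws")
        case True
        then show ?thesis using that[of j] j ale[of "Suc j"] by simp
      next
        case False
        obtain k where k: "j = Suc k" using j n False by (cases j) auto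
        then have "min (L k) (L (Suc k)) = \<alpha>" using j ale[of k] by simp
        then show ?thesis using that[of k] j k by simp
      qed
      then have "L i + L (Suc i) = 2 * \<alpha> + 1" using nf[OF i(1)] lip[OF i(1)] by linarith
      then show "seqval V E r ws \<le> real \<alpha>"
        using seqval_props(1)[OF n i(1), of V E r] edge[OF i(1)]
        by (simp add: of_nat_add[symmetric] del: of_nat_add)
      show "real \<alpha> \<le> seqval V E r ws"
      proof (rule seqval_ge[OF n])
        fix k assume k: "Suc k < length ws"
        have "L k + L (Suc k) \<ge> 2 * \<alpha> + 1" using nf[OF k] ale[of k] ale[of "Suc k"] k by linarith
        then have "real (L k) + real (L (Suc k)) \<ge> 2 * real \<alpha> + 1" by linarith
        then show "real \<alpha> \<le> gromov V E r (ws!k) (ws!Suc k)"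
          using edge[OF k] by simp
      qed
    qed
    then show ?thesis using False unfolding \<alpha>_def Let_def by simp
  qed
qed

theorem mainTheorem1:
  fixes V :: "'a set" and E :: "'a \<Rightarrow> 'a \<Rightarrow> bool" and r x y :: 'a
  assumes "fin_conn_graph V E" and "r \<in> V"
    and "x \<in> V" and "y \<in> V" and "x \<noteq> y"
  shows "(\<exists>ws. vseq V x y ws \<and> is_walk V E ws \<and> seqval V E r ws = fmax V E r x y)
    \<and> (\<forall>ws. vseq V x y ws \<and> is_walk V E ws \<and> seqval V E r ws = fmax V E r x y \<longrightarrow>
          (let \<alpha> = Min ((\<lambda>w. gdist V E w r) ` set ws) in
            fmax V E r x y =
              (if \<exists>i < length ws - 1. gdist V E (ws ! i) r = \<alpha> \<and> gdist V E (ws ! Suc i) r = \<alpha>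
               then real \<alpha> - 1/2 else real \<alpha>)))"
proof (intro conjI allI impI)
  note G = assms(1) and r = assms(2)
  have finV: "finite V" using G by (simp add: fin_conn_graph_def)
  show "\<exists>ws. vseq V x y ws \<and> is_walk V E ws \<and> seqval V E r ws = fmax V E r x y"
  proof -
    obtain ws0 where ws0: "vseq V x y ws0" "seqval V E r ws0 = fmax V E r x y"
      using fmax_props(1)[OF assms(3,4) finV] by blast
    let ?t = "fmax V E r x y"
    have n0: "2 \<le> length ws0" using ws0 by (simp add: vseq_def)
    have "successively (\<lambda>a b. ?t \<le> gromov V E r a b) ws0"
      unfolding successively_conv_nth using seqval_props(1)[OF n0, of _ V E r] ws0(2) by auto
    moreover have "ws0 \<noteq> []" "set ws0 \<subseteq> V" using ws0 n0 by (auto simp: vseq_def)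
    ultimately obtain W where W: "W \<noteq> []" "set W \<subseteq> V"
      "successively (\<lambda>a b. E a b \<and> ?t \<le> gromov V E r a b) W" "hd W = hd ws0" "last W = last ws0"
      using chain[OF G r, of ws0 ?t] by blast
    have hl: "hd W = x" "last W = y" using W(4,5) ws0(1) by (simp_all add: vseq_def)
    have nW: "2 \<le> length W"
    proof (rule ccontr)
      assume "\<not> 2 \<le> length W"
      moreover have "0 < length W" using W(1) by simp
      ultimately have "length W = 1" by linarith
      then have "hd W = last W" by (cases W) auto
      then show False using hl assms(5) by simp
    qed
    have vW: "vseq V x y W" using nW W(2) hl by (simp add: vseq_def)
    have wW: "is_walk V E W" using W unfolding is_walk_succ by (auto elim: successively_mono)
    have "?t \<le> seqval V E r W"
    proof (rule seqval_ge[OF nW])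
      fix i assume "Suc i < length W"
      from successively_nth[OF W(3) this] show "?t \<le> gromov V E r (W!i) (W!Suc i)" by simp
    qed
    moreover have "seqval V E r W \<le> ?t" using fmax_props(2)[OF assms(3,4) finV vW] .
    ultimately show ?thesis using vW wW by (intro exI[of _ W]) auto
  qed
  fix ws assume h: "vseq V x y ws \<and> is_walk V E ws \<and> seqval V E r ws = fmax V E r x y"
  then have "2 \<le> length ws" by (simp add: vseq_def)
  from walk_value[OF G r _ this, of ] h show "let \<alpha> = Min ((\<lambda>w. gdist V E w r) ` set ws) in
            fmax V E r x y =
              (if \<exists>i < length ws - 1. gdist V E (ws ! i) r = \<alpha> \<and> gdist V E (ws ! Suc i) r = \<alpha>
               then real \<alpha> - 1/2 else real \<alpha>)" by simp
qed

end
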